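(* Let $(A,\mathit{Con},\mid\!\sim)$ be an abstract nonmonotonic system and $(B,\mathit{Con}^*,\Delta)$ the normal default structure constructed from it as described in the context. If $P,Q\in\mathit{Con}$ satisfy $Q\subseteq P\subseteq\widetilde{Q}$, then $\widetilde{Q}\cup\{[Q]\}$ is an extension of $P$ in $(B,\mathit{Con}^*,\Delta)$.
   Context: An abstract nonmonotonic system is a triple $(A,\mathit{Con},\mid\!\sim)$ where $\mathit{Con}$ is a collection of finite subsets of $A$ and $\mid\!\sim\ \subseteq\mathit{Con}\times\mathit{Con}$, satisfying: (1) $X\subseteq Y\in\mathit{Con}\Rightarrow X\in\mathit{Con}$; (2) $a\in A\Rightarrow\{a\}\in\mathit{Con}$; (3) $X\mid\!\sim T\Rightarrow X\cup T\in\mathit{Con}$; (4) $Y\subseteq X\Rightarrow X\mid\!\sim Y$; (5) $X\mid\!\sim T$ and $T\cup X\mid\!\sim Y$ imply $X\mid\!\sim Y$; (6) $X\mid\!\sim Y$ and $X\mid\!\sim Z$ imply $X\mid\!\sim Y\cup Z$. Write $X\mid\!\sim a$ for $X\mid\!\sim\{a\}$, and $\widetilde{X}:=\{t\mid X\mid\!\sim\{t\}\}$. Construction: $B:=A\cup\{[X]\mid X\in\mathit{Con}\}$, where $[X]$ are new pairwise distinct tokens. $\Delta:=\{\frac{X:[X]}{[X]}\mid X\in\mathit{Con}\}\cup\{\frac{\{[X]\}:a}{a}\mid X\mid\!\sim a,\ a\notin X\}$. For finite $W\subseteq B$, $W\in\mathit{Con}^*$ iff (i) $W\cap A\in\mathit{Con}$;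 (ii) $W$ contains at most one token of the form $[X]$; (iii) if $[X]\in W$ then $X\mid\!\sim W\setminus\{[X]\}$. An arbitrary subset of $B$ is consistent if all its finite subsets are in $\mathit{Con}^*$. Extensions in $(B,\mathit{Con}^*,\Delta)$: for consistent $x\subseteq B$ and $S\subseteq B$, $\phi(x,S,0)=x$, $\phi(x,S,i+1)=\phi(x,S,i)\cup\{a\mid\frac{X:a}{a}\in\Delta,\ X\subseteq\phi(x,S,i),\ \{a\}\cup S\text{ consistent}\}$, $\Phi(x,S)=\bigcup_i\phi(x,S,i)$; $y$ is an extension of $x$ if $\Phi(x,y)=y$. *)

theory Defs
  imports Main
begin

definition ans :: "'a set \<Rightarrow> 'a set set \<Rightarrow> ('a set \<Rightarrow> 'a set \<Rightarrow> bool) \<Rightarrow> bool" where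
  "ans A Con rel \<longleftrightarrow>
     (\<forall>X\<in>Con. finite X \<and> X \<subseteq> A) \<and>
     (\<forall>X Y. rel X Y \<longrightarrow> X \<in> Con \<and> Y \<in> Con) \<and>
     (\<forall>X Y. X \<subseteq> Y \<and> Y \<in> Con \<longrightarrow> X \<in> Con) \<and>
     (\<forall>a\<in>A. {a} \<in> Con) \<and>
     (\<forall>X T. rel X T \<longrightarrow> X \<union> T \<in> Con) \<and>
     (\<forall>X Y. X \<in> Con \<and> Y \<subseteq> X \<longrightarrow> rel X Y) \<and>
     (\<forall>X T Y. rel X T \<and> rel (T \<union> X) Y \<longrightarrow> rel X Y) \<and>
     (\<forall>X Y Z. rel X Y \<and> rel X Z \<longrightarrow> rel X (Y \<union> Z))"

definition tilde :: "('a set \<Rightarrow> 'a set \<Rightarrow> bool) \<Rightarrow> 'a set \<Rightarrow> 'a set" where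
  "tilde rel X = {t. rel X {t}}"

text \<open>Tokens of B: elements of A (Atom a) and new tokens [X] (Brk X).\<close>
datatype 'a tok = Atom 'a | Brk "'a set"

definition atoms :: "'a tok set \<Rightarrow> 'a set" where
  "atoms W = {a. Atom a \<in> W}"

definition Bset :: "'a set \<Rightarrow> 'a set set \<Rightarrow> 'a tok set" where
  "Bset A Con = Atom ` A \<union> Brk ` Con"

text \<open>Defaults are normal: a pair (X, a) stands for the default X:a/a.\<close>
definition Delta :: "'a set set \<Rightarrow> ('a set \<Rightarrow> 'a set \<Rightarrow> bool) \<Rightarrow> ('a tok set \<times> 'a tok) set" where
  "Delta Con rel =
     {(Atom ` X, Brk X) | X. X \<in> Con} \<union>
     {({Brk X}, Atom a) | X a. rel X {a} \<and> a \<notin> X}"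

definition ConStar :: "'a set \<Rightarrow> 'a set set \<Rightarrow> ('a set \<Rightarrow> 'a set \<Rightarrow> bool) \<Rightarrow> 'a tok set \<Rightarrow> bool" where
  "ConStar A Con rel W \<longleftrightarrow>
     finite W \<and> W \<subseteq> Bset A Con \<and>
     atoms W \<in> Con \<and>
     (\<forall>X Y. Brk X \<in> W \<and> Brk Y \<in> W \<longrightarrow> X = Y) \<and>
     (\<forall>X. Brk X \<in> W \<longrightarrow> rel X (atoms (W - {Brk X})))"

definition consistentB :: "'a set \<Rightarrow> 'a set set \<Rightarrow> ('a set \<Rightarrow> 'a set \<Rightarrow> bool) \<Rightarrow> 'a tok set \<Rightarrow> bool" where
  "consistentB A Con rel x \<longleftrightarrow> (\<forall>W. finite W \<and> W \<subseteq> x \<longrightarrow> ConStar A Con rel W)"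

primrec phi :: "'a set \<Rightarrow> 'a set set \<Rightarrow> ('a set \<Rightarrow> 'a set \<Rightarrow> bool) \<Rightarrow> 'a tok set \<Rightarrow> 'a tok set \<Rightarrow> nat \<Rightarrow> 'a tok set" where
  "phi A Con rel x S 0 = x"
| "phi A Con rel x S (Suc i) = phi A Con rel x S i \<union>
     {a. \<exists>X. (X, a) \<in> Delta Con rel \<and> X \<subseteq> phi A Con rel x S i \<and>
            consistentB A Con rel (insert a S)}"

definition Phi :: "'a set \<Rightarrow> 'a set set \<Rightarrow> ('a set \<Rightarrow> 'a set \<Rightarrow> bool) \<Rightarrow> 'a tok set \<Rightarrow> 'a tok set \<Rightarrow> 'a tok set" where
  "Phi A Con rel x S = (\<Union>i. phi A Con rel x S i)"

definition is_extension :: "'a set \<Rightarrow> 'a set set \<Rightarrow> ('a set \<Rightarrow> 'a set \<Rightarrow> bool) \<Rightarrow> 'a tok set \<Rightarrow> 'a tok set \<Rightarrow> bool" where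
  "is_extension A Con rel x y \<longleftrightarrow> consistentB A Con rel x \<and> Phi A Con rel x y = y"

end

theory Submission
  imports Defs
begin

lemma ans_f1: assumes "ans A Con rel" shows "X \<in> Con \<Longrightarrow> finite X \<and> X \<subseteq> A"
proof -
  have "(\<forall>X\<in>Con. finite X \<and> X \<subseteq> A)" using assms unfolding ans_def by (elim conjE) assumption
  then show "X \<in> Con \<Longrightarrow> finite X \<and> X \<subseteq> A" by blast
qed

lemma ans_f2: assumes "ans A Con rel" shows "rel X Y \<Longrightarrow> X \<in> Con \<and> Y \<in> Con"
proof -
  have "(\<forall>X Y. rel X Y \<longrightarrow> X \<in> Con \<and> Y \<in> Con)" using assms unfolding ans_def by (elim conjE) assumption
  then show "rel X Y \<Longrightarrow> X \<in> Con \<and> Y \<in> Con" by blast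
qed

lemma ans_f3: assumes "ans A Con rel" shows "X \<subseteq> Y \<Longrightarrow> Y \<in> Con \<Longrightarrow> X \<in> Con"
proof -
  have "(\<forall>X Y. X \<subseteq> Y \<and> Y \<in> Con \<longrightarrow> X \<in> Con)" using assms unfolding ans_def by (elim conjE) assumption
  then show "X \<subseteq> Y \<Longrightarrow> Y \<in> Con \<Longrightarrow> X \<in> Con" by blast
qed

lemma ans_f4: assumes "ans A Con rel" shows "rel X T \<Longrightarrow> X \<union> T \<in> Con"
proof -
  have "(\<forall>X T. rel X T \<longrightarrow> X \<union> T \<in> Con)" using assms unfolding ans_def by (elim conjE) assumption
  then show "rel X T \<Longrightarrow> X \<union> T \<in> Con" by blast
qed

lemma ans_f5: assumes "ans A Con rel" shows "X \<in> Con \<Longrightarrow> Y \<subseteq> X \<Longrightarrow> rel X Y"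
proof -
  have "(\<forall>X Y. X \<in> Con \<and> Y \<subseteq> X \<longrightarrow> rel X Y)" using assms unfolding ans_def by (elim conjE) assumption
  then show "X \<in> Con \<Longrightarrow> Y \<subseteq> X \<Longrightarrow> rel X Y" by blast
qed

lemma ans_f6: assumes "ans A Con rel" shows "rel X Y \<Longrightarrow> rel X Z \<Longrightarrow> rel X (Y \<union> Z)"
proof -
  have "(\<forall>X Y Z. rel X Y \<and> rel X Z \<longrightarrow> rel X (Y \<union> Z))" using assms unfolding ans_def by (elim conjE) assumption
  then show "rel X Y \<Longrightarrow> rel X Z \<Longrightarrow> rel X (Y \<union> Z)" by blast
qed

lemmas ans_facts = ans_f1 ans_f2 ans_f3 ans_f4 ans_f5 ans_f6

lemma constar_brk: "ConStar A Con rel W \<Longrightarrow> Brk X \<in> W \<Longrightarrow> Brk Y \<in> W \<Longrightarrow> X = Y"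
  unfolding ConStar_def by blast

lemma cons_sub: "consistentB A Con rel x \<Longrightarrow> finite W \<Longrightarrow> W \<subseteq> x \<Longrightarrow> ConStar A Con rel W"
  unfolding consistentB_def by blast

lemma fin_rel:
  assumes "ans A Con rel" "Q \<in> Con" "finite F" "F \<subseteq> tilde rel Q"
  shows "rel Q F"
  using assms(3,4)
proof (induction F rule: finite_induct)
  case empty
  then show ?case using ans_facts(5)[OF assms(1,2)] by blast
next
  case (insert x F)
  then have "rel Q {x}" "rel Q F" by (auto simp: tilde_def)
  then have "rel Q ({x} \<union> F)" using ans_facts(6)[OF assms(1)] by blast
  then show ?case by simp
qed

lemma phi_mono: "phi A Con rel x S i \<subseteq> phi A Con rel x S (Suc i)"
  by auto

theorem lemma3:
  assumes "ans A Con rel"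
    and "P \<in> Con" and "Q \<in> Con"
    and "Q \<subseteq> P" and "P \<subseteq> tilde rel Q"
  shows "is_extension A Con rel (Atom ` P) (Atom ` tilde rel Q \<union> {Brk Q})"
proof -
  define y where "y = Atom ` tilde rel Q \<union> {Brk Q}"
  have ans: "ans A Con rel" by fact
  have tA: "tilde rel Q \<subseteq> A"
  proof
    fix t assume "t \<in> tilde rel Q"
    then have "rel Q {t}" by (simp add: tilde_def)
    then have "{t} \<in> Con" using ans_facts(2)[OF ans] by blast
    then show "t \<in> A" using ans_facts(1)[OF ans] by blast
  qed
  have QA: "Q \<subseteq> A" using assms(3) ans_facts(1)[OF ans] by blast
  have PA: "P \<subseteq> A" using assms(2) ans_facts(1)[OF ans] by blast
  have xcons: "consistentB A Con rel (Atom ` P)"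
    unfolding consistentB_def ConStar_def
  proof (intro allI impI, intro conjI)
    fix W assume W: "finite W \<and> W \<subseteq> Atom ` P"
    then show "finite W" by blast
    show "W \<subseteq> Bset A Con" using W PA unfolding Bset_def by blast
    have "atoms W \<subseteq> P" using W unfolding atoms_def by blast
    then show "atoms W \<in> Con" using assms(2) ans_facts(3)[OF ans] by blast
    show "\<forall>X Y. Brk X \<in> W \<and> Brk Y \<in> W \<longrightarrow> X = Y" using W by blast
    show "\<forall>X. Brk X \<in> W \<longrightarrow> rel X (atoms (W - {Brk X}))" using W by blast
  qed
  have ycons: "consistentB A Con rel y"
    unfolding consistentB_def ConStar_def
  proof (intro allI impI, intro conjI)
    fix W assume W: "finite W \<and> W \<subseteq> y"
    then show "finite W" by blast
    show "W \<subseteq> Bset A Con" using W tA assms(3) unfolding Bset_def y_def by blast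
    have fa: "finite (atoms W)"
    proof -
      have "atoms W = Atom -` W" unfolding atoms_def by auto
      moreover have "finite (Atom -` W)" using W by (intro finite_vimageI) (auto simp: inj_def)
      ultimately show ?thesis by simp
    qed
    have aw: "atoms W \<subseteq> tilde rel Q" using W unfolding atoms_def y_def by blast
    have r: "rel Q (atoms W)" using fin_rel[OF ans assms(3) fa aw] .
    then have "Q \<union> atoms W \<in> Con" using ans_facts(4)[OF ans] by blast
    then show "atoms W \<in> Con" using ans_facts(3)[OF ans] by blast
    show "\<forall>X Y. Brk X \<in> W \<and> Brk Y \<in> W \<longrightarrow> X = Y" using W unfolding y_def by blast
    show "\<forall>X. Brk X \<in> W \<longrightarrow> rel X (atoms (W - {Brk X}))"
    proof (intro allI impI)
      fix X assume "Brk X \<in> W"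
      then have "X = Q" using W unfolding y_def by blast
      moreover have "atoms (W - {Brk Q}) = atoms W" unfolding atoms_def by auto
      ultimately show "rel X (atoms (W - {Brk X}))" using r by simp
    qed
  qed
  have sub: "phi A Con rel (Atom ` P) y i \<subseteq> y" for i
  proof (induction i)
    case 0
    then show ?case using assms(5) unfolding y_def by auto
  next
    case (Suc i)
    show ?case
    proof
      fix a assume "a \<in> phi A Con rel (Atom ` P) y (Suc i)"
      then consider "a \<in> phi A Con rel (Atom ` P) y i"
        | X where "(X, a) \<in> Delta Con rel" "X \<subseteq> phi A Con rel (Atom ` P) y i"
           "consistentB A Con rel (insert a y)" by auto
      then show "a \<in> y"
      proof cases
        case 1 then show ?thesis using Suc by blast
      next
        case 2
        from 2(1) consider Z where "X = Atom ` Z" "a = Brk Z" "Z \<in> Con"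
          | Z b where "X = {Brk Z}" "a = Atom b" "rel Z {b}"
          unfolding Delta_def by blast
        then show ?thesis
        proof cases
          case 1
          have c: "consistentB A Con rel (insert (Brk Z) y)" using 2(3) 1(2) by simp
          have "ConStar A Con rel {Brk Z, Brk Q}"
            by (rule cons_sub[OF c]) (auto simp: y_def)
          then have "Z = Q" by (rule constar_brk) auto
          then show ?thesis using 1 unfolding y_def by blast
        next
          case b: 2
          have "Brk Z \<in> y" using 2(2) Suc b(1) by blast
          then have "Z = Q" unfolding y_def by blast
          then show ?thesis using b unfolding y_def tilde_def by blast
        qed
      qed
    qed
  qed
  have sup: "y \<subseteq> Phi A Con rel (Atom ` P) y"
  proof
    fix a assume a: "a \<in> y"
    have iy: "insert b y = y" if "b \<in> y" for b using that by blast
    have bq: "Brk Q \<in> phi A Con rel (Atom ` P) y 1"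
    proof -
      have "(Atom ` Q, Brk Q) \<in> Delta Con rel" using assms(3) unfolding Delta_def by blast
      moreover have "Atom ` Q \<subseteq> phi A Con rel (Atom ` P) y 0" using assms(4) by auto
      moreover have "consistentB A Con rel (insert (Brk Q) y)"
        using ycons iy[of "Brk Q"] unfolding y_def by simp
      ultimately show ?thesis by auto
    qed
    show "a \<in> Phi A Con rel (Atom ` P) y"
    proof (cases "a = Brk Q")
      case True then show ?thesis using bq unfolding Phi_def by blast
    next
      case False
      then obtain t where t: "a = Atom t" "t \<in> tilde rel Q" using a unfolding y_def by blast
      show ?thesis
      proof (cases "t \<in> Q")
        case True
        then have "a \<in> phi A Con rel (Atom ` P) y 0" using t assms(4) by auto
        then show ?thesis unfolding Phi_def by blast
      next
        case False
        have "({Brk Q}, Atom t) \<in> Delta Con rel"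
          using t False unfolding Delta_def tilde_def by blast
        moreover have "{Brk Q} \<subseteq> phi A Con rel (Atom ` P) y 1" using bq by blast
        moreover have "consistentB A Con rel (insert (Atom t) y)"
          using ycons iy[of "Atom t"] t a by simp
        ultimately have "Atom t \<in> phi A Con rel (Atom ` P) y (Suc 1)"
          by (simp only: phi.simps) blast
        then show ?thesis using t unfolding Phi_def by blast
      qed
    qed
  qed
  have "Phi A Con rel (Atom ` P) y = y"
    using sub sup unfolding Phi_def by blast
  then show ?thesis using xcons unfolding is_extension_def y_def by simp
qed

end
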